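(* Let $f:[0,1]\to\mathbb{R}$ be $1$-Lipschitz and let $\epsilon>0$. Then there exists an even polynomial $p(z)=\sum_{k=0}^{n/2}p_{2k}z^{2k}$ of degree $n=2\lceil4\epsilon^{-3}\rceil$ such that $\sup_{z\in[0,1]}|p(z)-f(z)|\le\epsilon$ and $|p_{2k}|\le 2^n$ for all $k=1,\dots,n/2$. *)

theory Defs
  imports "HOL-Analysis.Analysis" "HOL-Computational_Algebra.Polynomial"
begin

end

theory Submission
  imports Defs
begin

lemma coeff_lin_mult:
  fixes s :: real and q :: "real poly"
  assumes "\<bar>s\<bar> \<le> 1" "\<And>k. \<bar>coeff q k\<bar> \<le> real (m choose k)"
  shows "\<bar>coeff ([:1,s:] * q) k\<bar> \<le> real (Suc m choose k)"
proof (cases k)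
  case 0
  then show ?thesis using assms(2)[of 0] by simp
next
  case (Suc j)
  have "coeff ([:1,s:] * q) k = coeff q (Suc j) + s * coeff q j" using Suc by simp
  also have "\<bar>\<dots>\<bar> \<le> \<bar>coeff q (Suc j)\<bar> + \<bar>s\<bar> * \<bar>coeff q j\<bar>" by (metis abs_mult abs_triangle_ineq)
  also have "\<dots> \<le> real (m choose Suc j) + 1 * real (m choose j)"
    using assms by (intro add_mono mult_mono) auto
  finally show ?thesis using Suc by simp
qed

lemma coeff_q_bound:
  "\<bar>coeff ([:1,1:]^a * [:1,-1:]^b :: real poly) k\<bar> \<le> real ((a+b) choose k)"
proof (induction a arbitrary: k)
  case 0
  show ?case
  proof (induction b arbitrary: k)
    case 0
    then show ?case by (cases k) auto
  next
    case (Suc b)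
    have "\<bar>coeff ([:1,-1:] * [:1,-1:]^b :: real poly) k\<bar> \<le> real (Suc b choose k)"
      by (rule coeff_lin_mult) (use Suc in auto)
    then show ?case by simp
  qed
next
  case (Suc a)
  have "\<bar>coeff ([:1,1:] * ([:1,1:]^a * [:1,-1:]^b) :: real poly) k\<bar> \<le> real (Suc (a+b) choose k)"
    by (rule coeff_lin_mult) (use Suc in auto)
  then show ?case by (simp only: power_Suc mult.assoc add_Suc)
qed

lemma bern_var:
  assumes "m > 0"
  shows "(\<Sum>k\<le>m. (t - k/m)\<^sup>2 * Bernstein m k t) = t * (1 - t) / m"
proof -
  have *: "\<And>a b x::real. (a - b)\<^sup>2 * x = a * (a - 1) * x + (1 - 2 * b) * a * x + b * b * x"
    by (simp add: algebra_simps power2_eq_square)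
  have "(\<Sum>k\<le>m. (k - m * t)\<^sup>2 * Bernstein m k t) = m * t * (1 - t)"
    apply (simp add: * sum.distrib)
    apply (simp flip: sum_distrib_left add: mult.assoc)
    apply (simp add: algebra_simps power2_eq_square)
    done
  then have "(\<Sum>k\<le>m. (k - m * t)\<^sup>2 * Bernstein m k t)/m^2 = t * (1 - t) / m"
    by (simp add: power2_eq_square)
  then show ?thesis
    using assms by (simp add: sum_divide_distrib field_split_simps power2_commute)
qed

lemma abs_le_sq: fixes d e :: real assumes "e > 0" shows "\<bar>d\<bar> \<le> e/2 + d\<^sup>2/(2*e)"
proof -
  have "0 \<le> (\<bar>d\<bar> - e)\<^sup>2" by simp
  hence "2*e*\<bar>d\<bar> \<le> d\<^sup>2 + e\<^sup>2" by (simp add: power2_eq_square algebra_simps)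
  thus ?thesis using assms by (simp add: field_simps power2_eq_square)
qed

theorem lemma4:
  fixes f :: "real \<Rightarrow> real" and \<epsilon> :: real
  assumes "1-lipschitz_on {0..1} f"
    and "\<epsilon> > 0"
  shows "\<exists>p :: real poly.
           (let n = 2 * nat \<lceil>4 / \<epsilon> ^ 3\<rceil> in
              degree p \<le> n
            \<and> (\<forall>k. odd k \<longrightarrow> coeff p k = 0)
            \<and> (\<forall>z\<in>{0..1}. \<bar>poly p z - f z\<bar> \<le> \<epsilon>)
            \<and> (\<forall>k\<in>{1..n div 2}. \<bar>coeff p (2 * k)\<bar> \<le> 2 ^ n))"
proof -
  define m where "m = 2 * nat \<lceil>4 / \<epsilon> ^ 3\<rceil>"
  have e3: "4 / \<epsilon> ^ 3 > 0" using assms(2) by simp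
  have m1: "real m \<ge> 8 / \<epsilon> ^ 3" unfolding m_def
    using real_nat_ceiling_ge[of "4 / \<epsilon> ^ 3"] by simp
  have "\<lceil>4 / \<epsilon> ^ 3\<rceil> > 0" using e3 by simp
  hence m2: "m \<ge> 2" unfolding m_def by linarith
  hence mpos: "m > 0" by simp
  have mee: "real m * \<epsilon>\<^sup>2 \<ge> 1"
  proof (cases "\<epsilon> \<le> 1")
    case True
    have "real m * \<epsilon>\<^sup>2 \<ge> 8 / \<epsilon> ^ 3 * \<epsilon>\<^sup>2"
      using m1 by (intro mult_right_mono) auto
    also have "8 / \<epsilon> ^ 3 * \<epsilon>\<^sup>2 = 8 / \<epsilon>" using assms(2) by (simp add: field_simps power2_eq_square power3_eq_cube)
    also have "8 / \<epsilon> \<ge> 8" using True assms(2) by (simp add: field_simps)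
    finally show ?thesis by simp
  next
    case False
    have "1 \<le> \<epsilon>\<^sup>2" using False by (simp add: one_le_power)
    also have "\<dots> \<le> real m * \<epsilon>\<^sup>2" proof -
      have "1 * \<epsilon>\<^sup>2 \<le> real m * \<epsilon>\<^sup>2" using m2 by (intro mult_right_mono) auto
      thus ?thesis by simp
    qed
    finally show ?thesis .
  qed
  have lip: "\<bar>f a - f b\<bar> \<le> \<bar>a - b\<bar>" if "a \<in> {0..1}" "b \<in> {0..1}" for a b
    using lipschitz_onD[OF assms(1) that] by (simp add: dist_real_def)
  define f0 where "f0 = f 0"
  define c where "c j = f \<bar>2 * real j / real m - 1\<bar> - f0" for j
  define q :: "nat \<Rightarrow> real poly" where "q j = [:1,1:]^j * [:1,-1:]^(m-j)" for j
  define P where "P = (\<Sum>j\<le>m. smult (c j * real (m choose j) / 2^m) (q j))"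
  define Q where "Q = P + [:f0:]"
  have c1: "\<bar>c j\<bar> \<le> 1" if "j \<le> m" for j
  proof -
    have "real j / real m \<le> 1" using that mpos by simp
    hence "\<bar>2 * real j / real m - 1\<bar> \<le> 1" by (auto simp: abs_if)
    thus ?thesis unfolding c_def f0_def using lip[of "\<bar>2 * real j / real m - 1\<bar>" 0] by simp
  qed
  have coeffP: "\<bar>coeff P k\<bar> \<le> real (m choose k)" for k
  proof -
    have "\<bar>coeff P k\<bar> = \<bar>\<Sum>j\<le>m. c j * real (m choose j) / 2^m * coeff (q j) k\<bar>"
      by (simp add: P_def coeff_sum)
    also have "\<dots> \<le> (\<Sum>j\<le>m. \<bar>c j * real (m choose j) / 2^m * coeff (q j) k\<bar>)"
      by (rule sum_abs)
    also have "\<dots> \<le> (\<Sum>j\<le>m. real (m choose j) / 2^m * real (m choose k))"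
    proof (rule sum_mono)
      fix j assume j: "j \<in> {..m}"
      have qb: "\<bar>coeff (q j) k\<bar> \<le> real (m choose k)"
        using coeff_q_bound[of j "m-j" k] j by (simp add: q_def)
      have "\<bar>c j * real (m choose j) / 2^m * coeff (q j) k\<bar> = \<bar>c j\<bar> * (real (m choose j) / 2^m) * \<bar>coeff (q j) k\<bar>"
        by (simp add: abs_mult)
      also have "\<dots> \<le> 1 * (real (m choose j) / 2^m) * real (m choose k)"
        using c1 j qb by (intro mult_mono) auto
      finally show "\<bar>c j * real (m choose j) / 2^m * coeff (q j) k\<bar> \<le> real (m choose j) / 2^m * real (m choose k)" by simp
    qed
    also have "\<dots> = (\<Sum>j\<le>m. real (m choose j)) / 2^m * real (m choose k)"
      by (simp add: sum_distrib_right sum_divide_distrib)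
    also have "(\<Sum>j\<le>m. real (m choose j)) = 2^m"
      using choose_row_sum[of m] by (metis of_nat_numeral of_nat_power of_nat_sum)
    finally show ?thesis by simp
  qed
  have coeffQ0: "coeff Q k = 0" if "k > m" for k
  proof -
    have "m choose k = 0" using that by (simp add: binomial_eq_0)
    hence "coeff P k = 0" using coeffP[of k] by (metis abs_le_zero_iff of_nat_0)
    moreover have "k > 0" using that by simp
    ultimately show ?thesis by (simp add: Q_def coeff_pCons split: nat.split)
  qed
  have degQ: "degree Q \<le> m" by (rule degree_le) (use coeffQ0 in auto)
  have coeffQ: "\<bar>coeff Q k\<bar> \<le> 2^m" if "k \<ge> 1" for k
  proof -
    have "coeff Q k = coeff P k" using that by (cases k) (auto simp: Q_def)
    hence "\<bar>coeff Q k\<bar> \<le> real (m choose k)" using coeffP by simp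
    also have "\<dots> \<le> 2^m" using binomial_le_pow2[of m k]
      by (metis of_nat_le_iff of_nat_numeral of_nat_power)
    finally show ?thesis .
  qed
  have approx: "\<bar>poly Q x - f \<bar>x\<bar>\<bar> \<le> \<epsilon>" if x: "x \<in> {-1..1}" for x
  proof -
    define t where "t = (1 + x) / 2"
    have t01: "0 \<le> t" "t \<le> 1" using x by (auto simp: t_def)
    have tm: "real (m choose j) / 2^m * poly (q j) x = Bernstein m j t" if "j \<le> m" for j
    proof -
      have "(2::real)^m = 2^j * 2^(m-j)" using that by (simp flip: power_add)
      moreover have "t^j = (1+x)^j / 2^j" "(1-t)^(m-j) = (1-x)^(m-j) / 2^(m-j)"
        by (simp_all add: t_def power_divide field_simps)
      ultimately show ?thesis by (simp add: q_def Bernstein_def)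
    qed
    have polyP: "poly P x = (\<Sum>j\<le>m. c j * Bernstein m j t)"
      unfolding P_def poly_sum by (intro sum.cong refl) (auto simp flip: tm)
    have "poly Q x - f \<bar>x\<bar> = (\<Sum>j\<le>m. c j * Bernstein m j t) - (f \<bar>x\<bar> - f0) * (\<Sum>j\<le>m. Bernstein m j t)"
      by (simp add: Q_def polyP)
    also have "\<dots> = (\<Sum>j\<le>m. (f \<bar>2 * real j / real m - 1\<bar> - f \<bar>x\<bar>) * Bernstein m j t)"
      by (simp only: c_def left_diff_distrib sum_subtractf flip: sum_distrib_left)
    finally have eq: "poly Q x - f \<bar>x\<bar> = \<dots>" .
    have "\<bar>\<Sum>j\<le>m. (f \<bar>2 * real j / real m - 1\<bar> - f \<bar>x\<bar>) * Bernstein m j t\<bar>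
        \<le> (\<Sum>j\<le>m. \<bar>(f \<bar>2 * real j / real m - 1\<bar> - f \<bar>x\<bar>) * Bernstein m j t\<bar>)"
      by (rule sum_abs)
    also have "\<dots> \<le> (\<Sum>j\<le>m. (\<epsilon>/2 + (2 * (real j / real m - t))\<^sup>2 / (2*\<epsilon>)) * Bernstein m j t)"
    proof (rule sum_mono)
      fix j assume j: "j \<in> {..m}"
      have "real j / real m \<le> 1" using j mpos by simp
      hence a1: "\<bar>2 * real j / real m - 1\<bar> \<in> {0..1}" by (auto simp: abs_if)
      have a2: "\<bar>x\<bar> \<in> {0..1}" using x by auto
      have "\<bar>f \<bar>2 * real j / real m - 1\<bar> - f \<bar>x\<bar>\<bar> \<le> \<bar>\<bar>2 * real j / real m - 1\<bar> - \<bar>x\<bar>\<bar>"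
        by (rule lip[OF a1 a2])
      also have "\<dots> \<le> \<bar>(2 * real j / real m - 1) - x\<bar>" by (rule abs_triangle_ineq3)
      also have "(2 * real j / real m - 1) - x = 2 * (real j / real m - t)" by (simp add: t_def field_simps)
      also have "\<bar>2 * (real j / real m - t)\<bar> \<le> \<epsilon>/2 + (2 * (real j / real m - t))\<^sup>2 / (2*\<epsilon>)"
        by (rule abs_le_sq[OF assms(2)])
      finally have "\<bar>f \<bar>2 * real j / real m - 1\<bar> - f \<bar>x\<bar>\<bar> \<le> \<epsilon>/2 + (2 * (real j / real m - t))\<^sup>2 / (2*\<epsilon>)" .
      thus "\<bar>(f \<bar>2 * real j / real m - 1\<bar> - f \<bar>x\<bar>) * Bernstein m j t\<bar> \<le> (\<epsilon>/2 + (2 * (real j / real m - t))\<^sup>2 / (2*\<epsilon>)) * Bernstein m j t"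
        using Bernstein_nonneg[OF t01] by (simp add: abs_mult mult_right_mono)
    qed
    also have "\<dots> = \<epsilon>/2 * (\<Sum>j\<le>m. Bernstein m j t) + (2/\<epsilon>) * (\<Sum>j\<le>m. (t - real j / real m)\<^sup>2 * Bernstein m j t)"
    proof -
      have "\<And>j. (\<epsilon>/2 + (2 * (real j / real m - t))\<^sup>2 / (2*\<epsilon>)) * Bernstein m j t
              = \<epsilon>/2 * Bernstein m j t + (2/\<epsilon>) * ((t - real j / real m)\<^sup>2 * Bernstein m j t)"
        using assms(2) mpos by (simp add: power2_eq_square field_simps)
      then show ?thesis by (simp only: sum.distrib flip: sum_distrib_left)
    qed
    also have "\<dots> = \<epsilon>/2 + (2/\<epsilon>) * (t * (1 - t) / real m)"
      by (simp add: bern_var[OF mpos])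
    also have "\<dots> \<le> \<epsilon>/2 + (2/\<epsilon>) * (1/4 / real m)"
    proof -
      have "0 \<le> (t - 1/2)\<^sup>2" by simp
      hence "t * (1 - t) \<le> 1/4" by (simp add: power2_eq_square algebra_simps)
      thus ?thesis using assms(2) mpos by (intro add_left_mono mult_left_mono divide_right_mono) auto
    qed
    also have "\<dots> \<le> \<epsilon>"
    proof -
      have "1 / (2 * \<epsilon> * real m) \<le> \<epsilon> / 2" using mee assms(2) mpos
        by (simp add: field_simps power2_eq_square)
      thus ?thesis by (simp add: field_simps)
    qed
    finally show ?thesis using eq by simp
  qed
  define E where "E = (\<Sum>i\<le>m. monom (if even i then coeff Q i else 0) i)"
  have coeffE: "coeff E k = (if even k then coeff Q k else 0)" for k
    using coeffQ0[of k] by (auto simp: E_def coeff_sum coeff_monom)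
  have polyE: "poly E z = (poly Q z + poly Q (-z)) / 2" for z
  proof -
    have "poly Q z + poly Q (-z) = (\<Sum>i\<le>m. coeff Q i * z^i) + (\<Sum>i\<le>m. coeff Q i * (-z)^i)"
      by (subst (1 2) poly_as_sum_of_monoms'[OF degQ, symmetric]) (simp add: poly_sum poly_monom)
    also have "\<dots> = (\<Sum>i\<le>m. 2 * (if even i then coeff Q i else 0) * z^i)"
      by (simp add: sum.distrib[symmetric] power_minus' ) (intro sum.cong refl, auto)
    also have "\<dots> = 2 * poly E z"
      by (simp add: E_def poly_sum poly_monom sum_distrib_left mult.assoc)
    finally show ?thesis by simp
  qed
  show ?thesis unfolding Let_def m_def[symmetric]
  proof (intro exI[of _ E] conjI ballI allI impI)
    show "degree E \<le> m" by (rule degree_le) (use coeffE coeffQ0 in auto)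
    show "coeff E k = 0" if "odd k" for k using that coeffE by simp
    show "\<bar>poly E z - f z\<bar> \<le> \<epsilon>" if z: "z \<in> {0..1}" for z
    proof -
      have "\<bar>poly Q z - f \<bar>z\<bar>\<bar> \<le> \<epsilon>" "\<bar>poly Q (-z) - f \<bar>-z\<bar>\<bar> \<le> \<epsilon>" using z approx[of z] approx[of "-z"] by auto
      moreover have "\<bar>z\<bar> = z" using z by simp
      ultimately show ?thesis unfolding polyE by (simp add: abs_le_iff field_simps)
    qed
    show "\<bar>coeff E (2 * k)\<bar> \<le> 2 ^ m" if "k \<in> {1..m div 2}" for k
      using that coeffQ[of "2*k"] by (simp add: coeffE)
  qed
qed

end
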